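(* Let $m,n,s,k,c$ be positive integers such that $2\leq s\leq n$, $2\leq k\leq m$ and $ms=nk$. Let $\Omega$ be a subset of size $nkc$ of an abelian group $\Gamma$, and set $d=\gcd(s,k)$. If there exists a diagonal $\mathrm{MS}_\Omega(\frac{nk}{d},\frac{nk}{d};d,d;c)$, then there exists an $\mathrm{MS}_\Omega(m,n;s,k;c)$. In particular, if there exists a diagonal $\mathrm{MS}^0_\Omega(\frac{nk}{d},\frac{nk}{d};d,d;c)$, then there exists a $\mathrm{MS}^0_\Omega(m,n;s,k;c)$.
   Context: Let $(\Gamma,+)$ be an abelian group and $\Omega\subseteq\Gamma$ with $|\Omega|>1$. A partially filled array is an array in which some cells may be empty. A magic partially filled array set $\mathrm{MS}_\Omega(m,n;s,k;c)$ is a set of $c$ partially filled $m\times n$ arrays with entries in $\Omega$ such that every element of $\Omega$ appears exactly once in exactly one of the arrays, every array has $s$ filled cells in each row and $k$ in each column, and there exist $x,y\in\Gamma$ such that in every array each row sums to $x$ and each column sums to $y$; it is zero-sum, written $\mathrm{MS}^0_\Omega(m,n;s,k;c)$, if $x=y=0_\Gamma$. For an $N\times N$ partially filled array $A=(a_{i,j})$, the cell $(i,j)$ belongs to the diagonal $D_r$ if $j-i\equiv r\pmod N$; $A$ is $\ell$-diagonal if its nonempty cells are exactly the cells of $\ell$ consecutive diagonals $D_r,D_{r+1},\ldots,D_{r+\ell-1}$ (indices mod $N$). An $\mathrm{MS}_\Omega(N,N;d,d;c)$ is diagonal if every one of its arrays is $d$-diagonal. *)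

theory Defs
  imports Main
begin

text \<open>A partially filled m x n array with entries in type 'a is modelled as a function
  nat \<Rightarrow> nat \<Rightarrow> 'a option (row, column); None means empty cell.  Only the cells
  with i < m and j < n are relevant.  A family of c arrays is indexed by t < c.\<close>

type_synonym 'a pf_array = "nat \<Rightarrow> nat \<Rightarrow> 'a option"

definition row_cells :: "'a pf_array \<Rightarrow> nat \<Rightarrow> nat \<Rightarrow> nat set" where
  "row_cells A n i = {j. j < n \<and> A i j \<noteq> None}"

definition col_cells :: "'a pf_array \<Rightarrow> nat \<Rightarrow> nat \<Rightarrow> nat set" where
  "col_cells A m j = {i. i < m \<and> A i j \<noteq> None}"

text \<open>magic_set Omega m n s k c A x y: the family A 0, ..., A (c-1) is an
  MS_Omega(m,n;s,k;c) with row sums x and column sums y.\<close>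

definition magic_set ::
  "'a::ab_group_add set \<Rightarrow> nat \<Rightarrow> nat \<Rightarrow> nat \<Rightarrow> nat \<Rightarrow> nat \<Rightarrow> (nat \<Rightarrow> 'a pf_array) \<Rightarrow> 'a \<Rightarrow> 'a \<Rightarrow> bool"
  where
  "magic_set \<Omega> m n s k c A x y \<longleftrightarrow>
     (\<forall>t<c. \<forall>i<m. \<forall>j<n. \<forall>v. A t i j = Some v \<longrightarrow> v \<in> \<Omega>) \<and>
     (\<forall>v\<in>\<Omega>. \<exists>!(t, i, j). t < c \<and> i < m \<and> j < n \<and> A t i j = Some v) \<and>
     (\<forall>t<c. \<forall>i<m. card (row_cells (A t) n i) = s) \<and>
     (\<forall>t<c. \<forall>j<n. card (col_cells (A t) m j) = k) \<and>
     (\<forall>t<c. \<forall>i<m. (\<Sum>j\<in>row_cells (A t) n i. the (A t i j)) = x) \<and>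
     (\<forall>t<c. \<forall>j<n. (\<Sum>i\<in>col_cells (A t) m j. the (A t i j)) = y)"

definition exists_MS :: "'a::ab_group_add set \<Rightarrow> nat \<Rightarrow> nat \<Rightarrow> nat \<Rightarrow> nat \<Rightarrow> nat \<Rightarrow> bool" where
  "exists_MS \<Omega> m n s k c \<longleftrightarrow> (\<exists>A x y. magic_set \<Omega> m n s k c A x y)"

definition exists_MS0 :: "'a::ab_group_add set \<Rightarrow> nat \<Rightarrow> nat \<Rightarrow> nat \<Rightarrow> nat \<Rightarrow> nat \<Rightarrow> bool" where
  "exists_MS0 \<Omega> m n s k c \<longleftrightarrow> (\<exists>A. magic_set \<Omega> m n s k c A 0 0)"

definition on_diagonal :: "nat \<Rightarrow> int \<Rightarrow> nat \<Rightarrow> nat \<Rightarrow> bool" where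
  "on_diagonal N r i j \<longleftrightarrow> (int j - int i) mod int N = r mod int N"

definition is_diagonal_array :: "nat \<Rightarrow> nat \<Rightarrow> 'a pf_array \<Rightarrow> bool" where
  "is_diagonal_array N l A \<longleftrightarrow>
     (\<exists>r::int. \<forall>i<N. \<forall>j<N. A i j \<noteq> None \<longleftrightarrow> (\<exists>h<l. on_diagonal N (r + int h) i j))"

definition exists_diag_MS :: "'a::ab_group_add set \<Rightarrow> nat \<Rightarrow> nat \<Rightarrow> nat \<Rightarrow> bool" where
  "exists_diag_MS \<Omega> N d c \<longleftrightarrow>
     (\<exists>A x y. magic_set \<Omega> N N d d c A x y \<and> (\<forall>t<c. is_diagonal_array N d (A t)))"

definition exists_diag_MS0 :: "'a::ab_group_add set \<Rightarrow> nat \<Rightarrow> nat \<Rightarrow> nat \<Rightarrow> bool" where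
  "exists_diag_MS0 \<Omega> N d c \<longleftrightarrow>
     (\<exists>A. magic_set \<Omega> N N d d c A 0 0 \<and> (\<forall>t<c. is_diagonal_array N d (A t)))"

end

theory Submission imports Defs begin

definition injFG :: "nat \<Rightarrow> (nat \<Rightarrow> nat) \<Rightarrow> (nat \<Rightarrow> nat) \<Rightarrow> 'a pf_array \<Rightarrow> bool" where
  "injFG N f g B \<longleftrightarrow> (\<forall>i j i' j'. i<N \<longrightarrow> j<N \<longrightarrow> i'<N \<longrightarrow> j'<N \<longrightarrow> B i j \<noteq> None \<longrightarrow> B i' j' \<noteq> None
      \<longrightarrow> f i = f i' \<longrightarrow> g j = g j' \<longrightarrow> i = i' \<and> j = j')"

definition compressB :: "nat \<Rightarrow> (nat \<Rightarrow> nat) \<Rightarrow> (nat \<Rightarrow> nat) \<Rightarrow> (nat \<Rightarrow> 'a pf_array) \<Rightarrow> nat \<Rightarrow> 'a pf_array" where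
  "compressB N f g A t p q =
    (if \<exists>i j. i<N \<and> j<N \<and> f i = p \<and> g j = q \<and> A t i j \<noteq> None
     then (let ij = (SOME ij. fst ij < N \<and> snd ij < N \<and> f (fst ij) = p \<and> g (snd ij) = q \<and> A t (fst ij) (snd ij) \<noteq> None)
           in A t (fst ij) (snd ij))
     else None)"

lemma compressB1:
  assumes "injFG N f g (A t)" "i<N" "j<N" "A t i j \<noteq> None"
  shows "compressB N f g A t (f i) (g j) = A t i j"
proof -
  let ?P = "\<lambda>ij. fst ij < N \<and> snd ij < N \<and> f (fst ij) = f i \<and> g (snd ij) = g j \<and> A t (fst ij) (snd ij) \<noteq> None"
  have ex: "?P (i,j)" using assms by simp
  define z where "z = (SOME ij. ?P ij)"
  have Pz: "?P z" unfolding z_def using ex by (rule someI)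
  have zz: "fst z = i \<and> snd z = j"
    using assms(1)[unfolded injFG_def, rule_format, of "fst z" "snd z" i j] Pz assms(2-4) by simp
  have cond: "\<exists>i' j'. i'<N \<and> j'<N \<and> f i' = f i \<and> g j' = g j \<and> A t i' j' \<noteq> None"
    using ex by auto
  have "compressB N f g A t (f i) (g j) = A t (fst z) (snd z)"
    unfolding compressB_def Let_def z_def by (rule if_P[OF cond])
  thus ?thesis using zz by simp
qed

lemma compressB2:
  assumes "compressB N f g A t p q \<noteq> None"
  shows "\<exists>i j. i<N \<and> j<N \<and> f i = p \<and> g j = q \<and> A t i j \<noteq> None \<and> compressB N f g A t p q = A t i j"
proof -
  let ?P = "\<lambda>ij. fst ij < N \<and> snd ij < N \<and> f (fst ij) = p \<and> g (snd ij) = q \<and> A t (fst ij) (snd ij) \<noteq> None"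
  have e: "\<exists>i j. i<N \<and> j<N \<and> f i = p \<and> g j = q \<and> A t i j \<noteq> None"
  proof (rule ccontr)
    assume "\<not> (\<exists>i j. i<N \<and> j<N \<and> f i = p \<and> g j = q \<and> A t i j \<noteq> None)"
    hence "compressB N f g A t p q = None" unfolding compressB_def by (rule if_not_P)
    thus False using assms by simp
  qed
  then have "\<exists>ij. ?P ij" by auto
  hence "?P (SOME ij. ?P ij)" by (rule someI_ex)
  moreover have "compressB N f g A t p q = A t (fst (SOME ij. ?P ij)) (snd (SOME ij. ?P ij))"
    unfolding compressB_def Let_def by (rule if_P[OF e])
  ultimately show ?thesis by blast
qed

lemma sum_const_card:
  fixes x :: "'a::comm_monoid_add"
  assumes "finite A" "finite B" "card A = card B"
  shows "(\<Sum>_\<in>A. x) = (\<Sum>_\<in>B. x)"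
proof -
  obtain h where "bij_betw h A B" using assms finite_same_card_bij by blast
  thus ?thesis using sum.reindex_bij_betw[of h A B "\<lambda>_. x"] by simp
qed

lemma row_bij:
  assumes inj: "injFG N f g (A t)" and gn: "\<forall>j<N. g j < n"
  shows "bij_betw (\<lambda>(i,j). g j) (Sigma {i. i<N \<and> f i = p} (\<lambda>i. row_cells (A t) N i))
           (row_cells (compressB N f g A t) n p)"
  unfolding bij_betw_def
proof
  show "inj_on (\<lambda>(i,j). g j) (Sigma {i. i<N \<and> f i = p} (\<lambda>i. row_cells (A t) N i))"
  proof (rule inj_onI)
    fix x y assume a: "x \<in> Sigma {i. i<N \<and> f i = p} (\<lambda>i. row_cells (A t) N i)" "y \<in> Sigma {i. i<N \<and> f i = p} (\<lambda>i. row_cells (A t) N i)" "(\<lambda>(i,j). g j) x = (\<lambda>(i,j). g j) y"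
    obtain i j where x: "x = (i,j)" by (cases x) auto
    obtain i' j' where y: "y = (i',j')" by (cases y) auto
    have b: "i<N" "j<N" "i'<N" "j'<N" "A t i j \<noteq> None" "A t i' j' \<noteq> None" "f i = f i'" "g j = g j'"
      using a unfolding x y row_cells_def by auto
    have "i = i' \<and> j = j'" using inj[unfolded injFG_def] b by blast
    thus "x = y" using x y by simp
  qed
  show "(\<lambda>(i,j). g j) ` (Sigma {i. i<N \<and> f i = p} (\<lambda>i. row_cells (A t) N i)) = row_cells (compressB N f g A t) n p"
  proof
    show "(\<lambda>(i,j). g j) ` (Sigma {i. i<N \<and> f i = p} (\<lambda>i. row_cells (A t) N i)) \<subseteq> row_cells (compressB N f g A t) n p"
    proof (rule image_subsetI)
      fix x assume a: "x \<in> Sigma {i. i<N \<and> f i = p} (\<lambda>i. row_cells (A t) N i)"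
      obtain i j where x: "x = (i,j)" by (cases x) auto
      have b: "i<N" "j<N" "A t i j \<noteq> None" "f i = p" using a unfolding x row_cells_def by auto
      have "compressB N f g A t p (g j) = A t i j" using compressB1[of N f g A t i j, OF inj b(1-3)] b(4) by simp
      thus "(\<lambda>(i,j). g j) x \<in> row_cells (compressB N f g A t) n p" using b gn unfolding x row_cells_def by auto
    qed
    show "row_cells (compressB N f g A t) n p \<subseteq> (\<lambda>(i,j). g j) ` (Sigma {i. i<N \<and> f i = p} (\<lambda>i. row_cells (A t) N i))"
    proof
      fix q assume "q \<in> row_cells (compressB N f g A t) n p"
      then obtain i j where "i<N \<and> j<N \<and> f i = p \<and> g j = q \<and> A t i j \<noteq> None"
        using compressB2[of N f g A t p q] unfolding row_cells_def by blast
      thus "q \<in> (\<lambda>(i,j). g j) ` (Sigma {i. i<N \<and> f i = p} (\<lambda>i. row_cells (A t) N i))"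
        unfolding row_cells_def by force
    qed
  qed
qed

lemma col_bij:
  assumes inj: "injFG N f g (A t)" and fm: "\<forall>i<N. f i < m"
  shows "bij_betw (\<lambda>(j,i). f i) (Sigma {j. j<N \<and> g j = q} (\<lambda>j. col_cells (A t) N j))
           (col_cells (compressB N f g A t) m q)"
  unfolding bij_betw_def
proof
  show "inj_on (\<lambda>(j,i). f i) (Sigma {j. j<N \<and> g j = q} (\<lambda>j. col_cells (A t) N j))"
  proof (rule inj_onI)
    fix x y assume a: "x \<in> Sigma {j. j<N \<and> g j = q} (\<lambda>j. col_cells (A t) N j)" "y \<in> Sigma {j. j<N \<and> g j = q} (\<lambda>j. col_cells (A t) N j)" "(\<lambda>(j,i). f i) x = (\<lambda>(j,i). f i) y"
    obtain i j where x: "x = (j,i)" by (cases x) auto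
    obtain i' j' where y: "y = (j',i')" by (cases y) auto
    have b: "i<N" "j<N" "i'<N" "j'<N" "A t i j \<noteq> None" "A t i' j' \<noteq> None" "f i = f i'" "g j = g j'"
      using a unfolding x y col_cells_def by auto
    have "i = i' \<and> j = j'" using inj[unfolded injFG_def] b by blast
    thus "x = y" using x y by simp
  qed
  show "(\<lambda>(j,i). f i) ` (Sigma {j. j<N \<and> g j = q} (\<lambda>j. col_cells (A t) N j)) = col_cells (compressB N f g A t) m q"
  proof
    show "(\<lambda>(j,i). f i) ` (Sigma {j. j<N \<and> g j = q} (\<lambda>j. col_cells (A t) N j)) \<subseteq> col_cells (compressB N f g A t) m q"
    proof (rule image_subsetI)
      fix x assume a: "x \<in> Sigma {j. j<N \<and> g j = q} (\<lambda>j. col_cells (A t) N j)"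
      obtain j i where x: "x = (j,i)" by (cases x) auto
      have b: "i<N" "j<N" "A t i j \<noteq> None" "g j = q" using a unfolding x col_cells_def by auto
      have "compressB N f g A t (f i) q = A t i j" using compressB1[of N f g A t i j, OF inj b(1-3)] b(4) by simp
      thus "(\<lambda>(j,i). f i) x \<in> col_cells (compressB N f g A t) m q" using b fm unfolding x col_cells_def by auto
    qed
    show "col_cells (compressB N f g A t) m q \<subseteq> (\<lambda>(j,i). f i) ` (Sigma {j. j<N \<and> g j = q} (\<lambda>j. col_cells (A t) N j))"
    proof
      fix p assume "p \<in> col_cells (compressB N f g A t) m q"
      then obtain i j where "i<N \<and> j<N \<and> f i = p \<and> g j = q \<and> A t i j \<noteq> None"
        using compressB2[of N f g A t p q] unfolding col_cells_def by blast
      thus "p \<in> (\<lambda>(j,i). f i) ` (Sigma {j. j<N \<and> g j = q} (\<lambda>j. col_cells (A t) N j))"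
        unfolding col_cells_def by force
    qed
  qed
qed


lemma ex1_eq2:
  assumes "\<exists>!z. Q z" "Q a" "Q b"
  shows "a = b"
  using assms by blast

lemma compress:
  fixes A :: "nat \<Rightarrow> 'a::ab_group_add pf_array"
  assumes ms: "magic_set \<Omega> N N d d c A x y"
  and fm: "\<forall>i<N. f i < m" and gn: "\<forall>j<N. g j < n"
  and fa: "\<forall>p<m. card {i. i<N \<and> f i = p} = a"
  and gb: "\<forall>q<n. card {j. j<N \<and> g j = q} = b"
  and inj: "\<forall>t<c. injFG N f g (A t)"
  shows "magic_set \<Omega> m n (a*d) (b*d) c (compressB N f g A) (\<Sum>_\<in>{..<a}. x) (\<Sum>_\<in>{..<b}. y)"
proof -
  let ?B = "compressB N f g A"
  note M = ms[unfolded magic_set_def]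
  have M1: "\<forall>t<c. \<forall>i<N. \<forall>j<N. \<forall>v. A t i j = Some v \<longrightarrow> v \<in> \<Omega>" using M by (rule conjunct1)
  have M2: "\<forall>v\<in>\<Omega>. \<exists>!(t, i, j). t < c \<and> i < N \<and> j < N \<and> A t i j = Some v"
    using M[THEN conjunct2] by (rule conjunct1)
  have M3: "\<forall>t<c. \<forall>i<N. card (row_cells (A t) N i) = d"
    using M[THEN conjunct2, THEN conjunct2] by (rule conjunct1)
  have M4: "\<forall>t<c. \<forall>j<N. card (col_cells (A t) N j) = d"
    using M[THEN conjunct2, THEN conjunct2, THEN conjunct2] by (rule conjunct1)
  have M5: "\<forall>t<c. \<forall>i<N. (\<Sum>j\<in>row_cells (A t) N i. the (A t i j)) = x"
    using M[THEN conjunct2, THEN conjunct2, THEN conjunct2, THEN conjunct2] by (rule conjunct1)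
  have M6: "\<forall>t<c. \<forall>j<N. (\<Sum>i\<in>col_cells (A t) N j. the (A t i j)) = y"
    using M[THEN conjunct2, THEN conjunct2, THEN conjunct2, THEN conjunct2] by (rule conjunct2)
  have c1: "\<forall>t<c. \<forall>i<m. \<forall>j<n. \<forall>v. ?B t i j = Some v \<longrightarrow> v \<in> \<Omega>"
  proof (intro allI impI)
    fix t p q v assume t: "t<c" and "p<m" "q<n" and v: "?B t p q = Some v"
    then obtain i j where ij: "i<N" "j<N" "?B t p q = A t i j"
      using compressB2[of N f g A t p q] by auto
    hence "A t i j = Some v" using v by simp
    thus "v \<in> \<Omega>" using M1 t ij by blast
  qed
  have c2: "\<forall>v\<in>\<Omega>. \<exists>!(t, i, j). t < c \<and> i < m \<and> j < n \<and> ?B t i j = Some v"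
  proof
    fix v assume v: "v \<in> \<Omega>"
    have u: "\<exists>!(t, i, j). t < c \<and> i < N \<and> j < N \<and> A t i j = Some v" using M2 v by (rule bspec)
    then obtain z0 where "case z0 of (t, i, j) \<Rightarrow> t < c \<and> i < N \<and> j < N \<and> A t i j = Some v"
      by (rule ex1E) 
    then obtain t i j where tij: "t < c" "i < N" "j < N" "A t i j = Some v" by (cases z0) auto
    have B1: "?B t (f i) (g j) = Some v"
      using compressB1[of N f g A t i j] inj tij by auto
    show "\<exists>!(t, i, j). t < c \<and> i < m \<and> j < n \<and> ?B t i j = Some v"
    proof (rule ex1I[of _ "(t, f i, g j)"])
      show "case (t, f i, g j) of (t, i, j) \<Rightarrow> t < c \<and> i < m \<and> j < n \<and> ?B t i j = Some v"
        using B1 tij fm gn by auto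
    next
      fix z assume z: "case z of (t, i, j) \<Rightarrow> t < c \<and> i < m \<and> j < n \<and> ?B t i j = Some v"
      obtain t' p q where zz: "z = (t',p,q)" by (cases z) auto
      with z have t': "t' < c" "?B t' p q = Some v" by auto
      then obtain i' j' where ij': "i'<N" "j'<N" "f i' = p" "g j' = q" "A t' i' j' \<noteq> None" "?B t' p q = A t' i' j'"
        using compressB2[of N f g A t' p q] by auto
      have A': "A t' i' j' = Some v" using ij'(6) t'(2) by simp
      have "(t',i',j') = (t,i,j)"
        using ex1_eq2[OF u, of "(t',i',j')" "(t,i,j)"] ij' t' tij A' by simp
      hence "t' = t \<and> i' = i \<and> j' = j" by simp
      thus "z = (t, f i, g j)" using zz ij' by auto
    qed
  qed
  have rows: "card (row_cells (?B t) n p) = a*d \<and> (\<Sum>q\<in>row_cells (?B t) n p. the (?B t p q)) = (\<Sum>_\<in>{..<a}. x)"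
    if t: "t<c" and p: "p<m" for t p
  proof -
    let ?F = "{i. i<N \<and> f i = p}"
    let ?U = "Sigma ?F (\<lambda>i. row_cells (A t) N i)"
    have it: "injFG N f g (A t)" using inj t by auto
    have bij: "bij_betw (\<lambda>(i,j). g j) ?U (row_cells (?B t) n p)"
      using row_bij[of N f g A t n p, OF it gn] .
    have fF: "finite ?F" by auto
    have fR: "\<And>i. finite (row_cells (A t) N i)" unfolding row_cells_def by auto
    have cF: "card ?F = a" using fa p by auto
    have "card (row_cells (?B t) n p) = card ?U" using bij_betw_same_card[OF bij] by simp
    also have "\<dots> = (\<Sum>i\<in>?F. card (row_cells (A t) N i))" using fF fR by (simp add: card_SigmaI)
    also have "\<dots> = (\<Sum>i\<in>?F. d)" using M3 t by (intro sum.cong) auto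
    also have "\<dots> = a*d" using cF by simp
    finally have C: "card (row_cells (?B t) n p) = a*d" .
    have "(\<Sum>q\<in>row_cells (?B t) n p. the (?B t p q)) = (\<Sum>z\<in>?U. the (?B t p ((\<lambda>(i,j). g j) z)))"
      using sum.reindex_bij_betw[OF bij, of "\<lambda>q. the (?B t p q)"] by simp
    also have "\<dots> = (\<Sum>z\<in>?U. the (A t (fst z) (snd z)))"
    proof (intro sum.cong refl)
      fix z assume "z \<in> ?U"
      then obtain i j where "z = (i,j)" "i<N" "f i = p" "j<N" "A t i j \<noteq> None"
        unfolding row_cells_def by auto
      thus "the (?B t p ((\<lambda>(i,j). g j) z)) = the (A t (fst z) (snd z))"
        using compressB1[of N f g A t i j] it by auto
    qed
    also have "\<dots> = (\<Sum>i\<in>?F. \<Sum>j\<in>row_cells (A t) N i. the (A t i j))"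
      using sum.Sigma[OF fF, of "row_cells (A t) N" "\<lambda>i j. the (A t i j)"] fR
      by (simp add: case_prod_beta')
    also have "\<dots> = (\<Sum>i\<in>?F. x)" using M5 t by (intro sum.cong) auto
    also have "\<dots> = (\<Sum>_\<in>{..<a}. x)" using cF by (intro sum_const_card) auto
    finally show ?thesis using C by simp
  qed
  have cols: "card (col_cells (?B t) m q) = b*d \<and> (\<Sum>p\<in>col_cells (?B t) m q. the (?B t p q)) = (\<Sum>_\<in>{..<b}. y)"
    if t: "t<c" and q: "q<n" for t q
  proof -
    let ?F = "{j. j<N \<and> g j = q}"
    let ?U = "Sigma ?F (\<lambda>j. col_cells (A t) N j)"
    have it: "injFG N f g (A t)" using inj t by auto
    have bij: "bij_betw (\<lambda>(j,i). f i) ?U (col_cells (?B t) m q)"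
      using col_bij[of N f g A t m q, OF it fm] .
    have fF: "finite ?F" by auto
    have fR: "\<And>j. finite (col_cells (A t) N j)" unfolding col_cells_def by auto
    have cF: "card ?F = b" using gb q by auto
    have "card (col_cells (?B t) m q) = card ?U" using bij_betw_same_card[OF bij] by simp
    also have "\<dots> = (\<Sum>j\<in>?F. card (col_cells (A t) N j))" using fF fR by (simp add: card_SigmaI)
    also have "\<dots> = (\<Sum>j\<in>?F. d)" using M4 t by (intro sum.cong) auto
    also have "\<dots> = b*d" using cF by simp
    finally have C: "card (col_cells (?B t) m q) = b*d" .
    have "(\<Sum>p\<in>col_cells (?B t) m q. the (?B t p q)) = (\<Sum>z\<in>?U. the (?B t ((\<lambda>(j,i). f i) z) q))"
      using sum.reindex_bij_betw[OF bij, of "\<lambda>p. the (?B t p q)"] by simp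
    also have "\<dots> = (\<Sum>z\<in>?U. the (A t (snd z) (fst z)))"
    proof (intro sum.cong refl)
      fix z assume "z \<in> ?U"
      then obtain i j where "z = (j,i)" "i<N" "g j = q" "j<N" "A t i j \<noteq> None"
        unfolding col_cells_def by auto
      thus "the (?B t ((\<lambda>(j,i). f i) z) q) = the (A t (snd z) (fst z))"
        using compressB1[of N f g A t i j] it by auto
    qed
    also have "\<dots> = (\<Sum>j\<in>?F. \<Sum>i\<in>col_cells (A t) N j. the (A t i j))"
      using sum.Sigma[OF fF, of "col_cells (A t) N" "\<lambda>j i. the (A t i j)"] fR
      by (simp add: case_prod_beta')
    also have "\<dots> = (\<Sum>j\<in>?F. y)" using M6 t by (intro sum.cong) auto
    also have "\<dots> = (\<Sum>_\<in>{..<b}. y)" using cF by (intro sum_const_card) auto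
    finally show ?thesis using C by simp
  qed
  show ?thesis unfolding magic_set_def using c1 c2 rows cols by blast
qed


lemma fiber_card:
  fixes N m p :: nat
  assumes "0 < m" "m dvd N" "p < m"
  shows "card {i. i<N \<and> i mod m = p} = N div m"
proof -
  obtain w where N: "N = m*w" using assms(2) by (rule dvdE)
  have eq: "{i. i<N \<and> i mod m = p} = (\<lambda>t. p + t*m) ` {..<w}"
  proof
    show "{i. i<N \<and> i mod m = p} \<subseteq> (\<lambda>t. p + t*m) ` {..<w}"
    proof
      fix i assume i: "i \<in> {i. i<N \<and> i mod m = p}"
      have e: "i mod m + i div m * m = i" by (rule mod_div_mult_eq)
      have ip: "i mod m = p" using i by simp
      have "i = p + (i div m)*m" using e ip by simp
      moreover have "i < w*m" using i N by (simp add: mult.commute)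
      hence "i div m < w" by (rule less_mult_imp_div_less)
      ultimately show "i \<in> (\<lambda>t. p + t*m) ` {..<w}" by blast
    qed
    show "(\<lambda>t. p + t*m) ` {..<w} \<subseteq> {i. i<N \<and> i mod m = p}"
    proof
      fix i assume "i \<in> (\<lambda>t. p + t*m) ` {..<w}"
      then obtain t where t: "t<w" "i = p + t*m" by auto
      have "p + t*m < m + t*m" using assms by simp
      also have "\<dots> = (t+1)*m" by simp
      also have "\<dots> \<le> w*m" using t by (intro mult_right_mono) auto
      finally have "i < N" using t N by (simp add: mult.commute)
      moreover have "i mod m = p" using t assms(3) by simp
      ultimately show "i \<in> {i. i<N \<and> i mod m = p}" by simp
    qed
  qed
  have inj: "inj_on (\<lambda>t. p + t*m) {..<w}" using assms(1) by (auto simp: inj_on_def)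
  have "card ((\<lambda>t. p + t*m) ` {..<w}) = w" using card_image[OF inj] by simp
  hence "card {i. i<N \<and> i mod m = p} = w" using eq by simp
  thus ?thesis using N assms(1) by simp
qed

lemma int_dvd_small:
  fixes D a :: int
  assumes "D dvd a" "\<bar>a\<bar> < D"
  shows "a = 0"
proof (rule ccontr)
  assume "a \<noteq> 0"
  hence "\<bar>D\<bar> \<le> \<bar>a\<bar>" using dvd_imp_le_int assms(1) by blast
  thus False using assms(2) by linarith
qed

lemma nat_mod_int_dvd:
  fixes i i' M :: nat
  assumes "i mod M = i' mod M"
  shows "int M dvd (int i - int i')"
proof -
  have "int (i mod M) = int (i' mod M)" using assms by simp
  hence "int i mod int M = int i' mod int M" by (simp only: of_nat_mod)
  thus ?thesis by (simp only: mod_eq_dvd_iff)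
qed

lemma inj_diag:
  fixes u s' k' d i j i' j' h h' :: nat and r :: int
  assumes cop: "coprime s' k'" and du: "d \<le> u" and pos: "0<u" "0<s'" "0<k'"
  and N: "N = u*s'*k'"
  and lt: "i<N" "j<N" "i'<N" "j'<N" "h<d" "h'<d"
  and od: "on_diagonal N (r + int h) i j" "on_diagonal N (r + int h') i' j'"
  and mi: "i mod (u*k') = i' mod (u*k')" and mj: "j mod (u*s') = j' mod (u*s')"
  shows "i = i' \<and> j = j'"
proof -
  define D where "D = int N"
  have D: "D = int u * int s' * int k'" using N D_def by simp
  have e1: "(int j - int i) mod D = (r + int h) mod D" using od(1) unfolding on_diagonal_def D_def .
  have e2: "(int j' - int i') mod D = (r + int h') mod D" using od(2) unfolding on_diagonal_def D_def .
  have dD: "D dvd ((int j - int i) - (int j' - int i') - (int h - int h'))"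
  proof -
    have a: "D dvd ((int j - int i) - (r + int h))" using e1 by (simp only: mod_eq_dvd_iff)
    have b: "D dvd ((int j' - int i') - (r + int h'))" using e2 by (simp only: mod_eq_dvd_iff)
    have eq: "(int j - int i) - (int j' - int i') - (int h - int h')
       = ((int j - int i) - (r + int h)) - ((int j' - int i') - (r + int h'))" by simp
    show ?thesis by (subst eq) (rule dvd_diff[OF a b])
  qed
  have di0: "int (u*k') dvd (int i - int i')" by (rule nat_mod_int_dvd[OF mi])
  have di: "int u * int k' dvd (int i - int i')" using di0 by simp
  have dj0: "int (u*s') dvd (int j - int j')" by (rule nat_mod_int_dvd[OF mj])
  have dj: "int u * int s' dvd (int j - int j')" using dj0 by simp
  have uD: "int u dvd D" using D by simp
  have "int u dvd (int h - int h')"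
  proof -
    have a: "int u dvd ((int j - int i) - (int j' - int i') - (int h - int h'))" using dvd_trans[OF uD dD] .
    have b: "int u dvd (int j - int j')" using dj by (rule dvd_mult_left)
    have c: "int u dvd (int i - int i')" using di by (rule dvd_mult_left)
    have eq: "(int h - int h') = ((int j - int j') - (int i - int i')) - ((int j - int i) - (int j' - int i') - (int h - int h'))"
      by simp
    show ?thesis by (subst eq) (rule dvd_diff[OF dvd_diff[OF b c] a])
  qed
  moreover have "\<bar>int h - int h'\<bar> < int u" using lt du by auto
  ultimately have "int h - int h' = 0" by (rule int_dvd_small)
  hence hh: "h = h'" by simp
  have eq2: "(int j - int j') - (int i - int i') = (int j - int i) - (int j' - int i') - (int h - int h')"
    using hh by simp
  have dD2: "D dvd ((int j - int j') - (int i - int i'))" by (subst eq2) (rule dD)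
  have mD: "int u * int k' dvd D" unfolding D by (simp add: mult.assoc mult.left_commute)
  have nD: "int u * int s' dvd D" unfolding D by simp
  have dj2: "int u * int k' dvd (int j - int j')"
  proof -
    have "int u * int k' dvd ((int j - int j') - (int i - int i'))" using dvd_trans[OF mD dD2] .
    hence "int u * int k' dvd ((int j - int j') - (int i - int i') + (int i - int i'))" using di by (rule dvd_add)
    thus ?thesis by simp
  qed
  have di2: "int u * int s' dvd (int i - int i')"
  proof -
    have x: "int u * int s' dvd ((int j - int j') - (int i - int i'))" using dvd_trans[OF nD dD2] .
    have "int u * int s' dvd ((int j - int j') - ((int j - int j') - (int i - int i')))"
      by (rule dvd_diff[OF dj x])
    thus ?thesis by simp
  qed
  have copi: "coprime (int s') (int k')" using cop by simp
  have lcm: "D dvd z" if a: "int u * int k' dvd z" and b: "int u * int s' dvd z" for z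
  proof -
    have "int u dvd z" using a by (rule dvd_mult_left)
    then obtain w where w: "z = int u * w" unfolding dvd_def by blast
    have u0: "int u \<noteq> 0" using pos by simp
    have "int u * int k' dvd int u * w" using a w by simp
    hence k: "int k' dvd w" using u0 by simp
    have "int u * int s' dvd int u * w" using b w by simp
    hence s: "int s' dvd w" using u0 by simp
    have "int s' * int k' dvd w" by (rule divides_mult[OF s k copi])
    hence "int u * (int s' * int k') dvd int u * w" by (rule mult_dvd_mono[OF dvd_refl])
    thus "D dvd z" using w D by (simp add: mult.assoc)
  qed
  have "int i - int i' = 0"
  proof (rule int_dvd_small)
    show "D dvd (int i - int i')" using lcm[OF di di2] .
    show "\<bar>int i - int i'\<bar> < D" using lt D_def by auto
  qed
  moreover have "int j - int j' = 0"
  proof (rule int_dvd_small)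
    show "D dvd (int j - int j')" using lcm[OF dj2 dj] .
    show "\<bar>int j - int j'\<bar> < D" using lt D_def by auto
  qed
  ultimately show ?thesis by simp
qed


lemma diag_inj:
  assumes cop: "coprime s' k'" and du: "d \<le> u" and pos: "0<u" "0<s'" "0<k'"
  and N: "N = u*s'*k'"
  and dg: "is_diagonal_array N d B"
  shows "injFG N (\<lambda>i. i mod (u*k')) (\<lambda>j. j mod (u*s')) B"
proof -
  obtain r where r: "\<forall>i<N. \<forall>j<N. B i j \<noteq> None \<longleftrightarrow> (\<exists>h<d. on_diagonal N (r + int h) i j)"
    using dg unfolding is_diagonal_array_def by blast
  show ?thesis unfolding injFG_def
  proof (intro allI impI)
    fix i j i' j' assume a: "i<N" "j<N" "i'<N" "j'<N" "B i j \<noteq> None" "B i' j' \<noteq> None"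
      "i mod (u*k') = i' mod (u*k')" "j mod (u*s') = j' mod (u*s')"
    obtain h where h: "h<d" "on_diagonal N (r + int h) i j" using r a by blast
    obtain h' where h': "h'<d" "on_diagonal N (r + int h') i' j'" using r a by blast
    show "i = i' \<and> j = j'"
      using inj_diag[OF cop du pos N a(1-4) h(1) h'(1) h(2) h'(2) a(7) a(8)] .
  qed
qed

theorem mainTheorem3:
  fixes m n s k c :: nat and \<Omega> :: "'a::ab_group_add set"
  assumes "0 < m" "0 < n" "0 < s" "0 < k" "0 < c"
    and "2 \<le> s" "s \<le> n" "2 \<le> k" "k \<le> m" "m * s = n * k"
    and "finite \<Omega>" "card \<Omega> = n * k * c"
  shows "(exists_diag_MS \<Omega> ((n * k) div gcd s k) (gcd s k) c \<longrightarrow> exists_MS \<Omega> m n s k c) \<and>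
         (exists_diag_MS0 \<Omega> ((n * k) div gcd s k) (gcd s k) c \<longrightarrow> exists_MS0 \<Omega> m n s k c)"
proof -
  define d where "d = gcd s k"
  have d0: "0 < d" using assms(3) d_def by simp
  obtain s' where s': "s = d*s'" unfolding d_def by (rule dvdE[OF gcd_dvd1])
  obtain k' where k': "k = d*k'" unfolding d_def by (rule dvdE[OF gcd_dvd2])
  have "d * gcd s' k' = gcd (d*s') (d*k')" by (rule gcd_mult_distrib_nat)
  also have "\<dots> = gcd s k" by (simp only: s'[symmetric] k'[symmetric])
  also have "\<dots> = d" by (simp only: d_def)
  finally have dg: "d * gcd s' k' = d" .
  hence "gcd s' k' = 1" using d0 by simp
  hence cop: "coprime s' k'" by (simp add: coprime_iff_gcd_eq_1)
  have ps: "0<s'" "0<k'" using s' k' assms(3,4) by auto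
  have "m*(d*s') = n*(d*k')" using assms(10) unfolding s' k' .
  hence "d*(m*s') = d*(n*k')" by (simp add: ac_simps)
  hence msk: "m*s' = n*k'" using d0 by simp
  have "s' dvd n*k'" using msk by (metis dvd_triv_right)
  hence "s' dvd n" using cop by (simp add: coprime_dvd_mult_left_iff)
  then obtain u where u: "n = s'*u" by (rule dvdE)
  have "s'*m = s'*(u*k')" using msk unfolding u by (simp add: ac_simps)
  hence mu: "m = u*k'" using ps by simp
  have nu: "n = u*s'" using u by simp
  have pu: "0<u" using assms(2) u by simp
  have "s'*d \<le> s'*u" using assms(7) unfolding s' u by (simp add: ac_simps)
  hence du: "d \<le> u" using ps by simp
  define N where "N = (n * k) div d"
  have "n*k = d*(u*s'*k')" unfolding nu k' by (simp add: ac_simps)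
  hence N: "N = u*s'*k'" unfolding N_def using d0 by simp
  have Nm: "N = m*s'" unfolding N mu by (simp add: ac_simps)
  have Nn: "N = n*k'" unfolding N nu by (simp add: ac_simps)
  have fm: "\<forall>i<N. i mod m < m" using assms(1) by simp
  have gn: "\<forall>j<N. j mod n < n" using assms(2) by simp
  have fa: "\<forall>p<m. card {i. i<N \<and> i mod m = p} = s'"
  proof (intro allI impI)
    fix p assume "p<m"
    hence "card {i. i<N \<and> i mod m = p} = N div m" using fiber_card[of m N p] assms(1) Nm by simp
    thus "card {i. i<N \<and> i mod m = p} = s'" using Nm assms(1) by simp
  qed
  have gb: "\<forall>q<n. card {j. j<N \<and> j mod n = q} = k'"
  proof (intro allI impI)
    fix q assume "q<n"
    hence "card {j. j<N \<and> j mod n = q} = N div n" using fiber_card[of n N q] assms(2) Nn by simp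
    thus "card {j. j<N \<and> j mod n = q} = k'" using Nn assms(2) by simp
  qed
  have sd: "s'*d = s" "k'*d = k" using s' k' by simp_all
  have key: "magic_set \<Omega> m n s k c (compressB N (\<lambda>i. i mod m) (\<lambda>j. j mod n) A) (\<Sum>_\<in>{..<s'}. x) (\<Sum>_\<in>{..<k'}. y)"
    if ms: "magic_set \<Omega> N N d d c A x y" and dg: "\<forall>t<c. is_diagonal_array N d (A t)" for A x y
  proof -
    have inj: "\<forall>t<c. injFG N (\<lambda>i. i mod m) (\<lambda>j. j mod n) (A t)"
      unfolding mu nu using diag_inj[OF cop du pu ps N] dg by blast
    show ?thesis using compress[OF ms fm gn fa gb inj] unfolding sd .
  qed
  show ?thesis
  proof
    show "exists_diag_MS \<Omega> ((n * k) div gcd s k) (gcd s k) c \<longrightarrow> exists_MS \<Omega> m n s k c"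
      unfolding exists_diag_MS_def exists_MS_def d_def[symmetric] N_def[symmetric] using key by blast
    show "exists_diag_MS0 \<Omega> ((n * k) div gcd s k) (gcd s k) c \<longrightarrow> exists_MS0 \<Omega> m n s k c"
      unfolding exists_diag_MS0_def exists_MS0_def d_def[symmetric] N_def[symmetric]
    proof
      assume "\<exists>A. magic_set \<Omega> N N d d c A 0 0 \<and> (\<forall>t<c. is_diagonal_array N d (A t))"
      then obtain A where "magic_set \<Omega> N N d d c A 0 0" "\<forall>t<c. is_diagonal_array N d (A t)" by blast
      from key[OF this] show "\<exists>A. magic_set \<Omega> m n s k c A 0 0" by auto
    qed
  qed
qed

end
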